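(* Let $\sigma_A>0$, let $A\in\mathbb R^{m\times d}$ have i.i.d. entries $A_{i,j}\sim\mathcal N(0,\sigma_A^2)$, let $b\in\mathbb R^m$, let $\phi(z)=\max\{z,0\}$ be the ReLU applied coordinatewise, and let $f(x)=\phi(Ax+b)$ for $x\in[0,1]^d$. Define the $\ell_2$ global sensitivity \[ \mathrm{GS}_2(f)=\sup\{\|f(x_1)-f(x_2)\|_2 : x_1,x_2\in[0,1]^d \text{ differ in at most one entry}\}. \] Then for any $\delta\in(0,1)$, \[ \Pr_A\Big[\mathrm{GS}_2(f)\le 2\sigma_A\big(\sqrt{md}+\sqrt{\log(1/\delta)}\big)\Big]\ge1-\delta . \]
   Context: $\|\cdot\|_2$ is the Euclidean norm. The probability is over the random matrix $A$. *)

theory Defs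
  imports "HOL-Probability.Probability"
begin

text \<open>Gaussian N(0, sigma^2) as a measure on the reals (sigma is the standard deviation).\<close>
definition gaussian :: "real \<Rightarrow> real measure" where
  "gaussian \<sigma> = density lborel (normal_density 0 \<sigma>)"

definition gauss_matrix_law :: "real \<Rightarrow> (('m::finite \<times> 'd::finite) \<Rightarrow> real) measure" where
  "gauss_matrix_law \<sigma> = PiM UNIV (\<lambda>_. gaussian \<sigma>)"

definition to_matrix :: "(('m::finite \<times> 'd::finite) \<Rightarrow> real) \<Rightarrow> real^'d^'m" where
  "to_matrix a = (\<chi> i j. a (i, j))"

definition relu_vec :: "real^'m \<Rightarrow> real^'m" where
  "relu_vec z = (\<chi> i. max (z $ i) 0)"

definition relu_layer :: "real^'d^'m \<Rightarrow> real^'m \<Rightarrow> real^'d \<Rightarrow> real^'m" where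
  "relu_layer A b x = relu_vec (A *v x + b)"

definition unit_cube :: "(real^'d::finite) set" where
  "unit_cube = {x. \<forall>j. 0 \<le> x $ j \<and> x $ j \<le> 1}"

definition neighbours :: "real^'d::finite \<Rightarrow> real^'d \<Rightarrow> bool" where
  "neighbours x y \<longleftrightarrow> card {j. x $ j \<noteq> y $ j} \<le> 1"

definition GS2 :: "(real^'d::finite \<Rightarrow> real^'m::finite) \<Rightarrow> real" where
  "GS2 f = Sup {norm (f x1 - f x2) | x1 x2. x1 \<in> unit_cube \<and> x2 \<in> unit_cube \<and> neighbours x1 x2}"

end

theory Submission imports Defs begin

definition Qf :: "(('m::finite \<times> 'd::finite) \<Rightarrow> real) \<Rightarrow> real" where
  "Qf a = (\<Sum>p\<in>UNIV. (a p)^2)"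

lemma relu_lip: "norm (relu_vec u - relu_vec v) \<le> norm (u - v)"
  unfolding relu_vec_def
  by (rule norm_le_componentwise_cart) (auto simp: max_def)

lemma norm_sq_vec: "(norm (x::real^'n))^2 = (\<Sum>j\<in>UNIV. (x$j)^2)"
  by (simp add: norm_vec_def L2_set_def sum_nonneg)

lemma mat_bound:
  fixes a :: "('m::finite \<times> 'd::finite) \<Rightarrow> real"
  shows "(norm (to_matrix a *v v))^2 \<le> Qf a * (norm v)^2"
proof -
  let ?A = "to_matrix a"
  have row: "(?A *v v) $ i = ?A$i \<bullet> v" for i
    by (simp add: matrix_vector_mult_def inner_vec_def)
  have "(norm (?A *v v))^2 = (\<Sum>i\<in>UNIV. (?A$i \<bullet> v)^2)"
    by (simp add: norm_sq_vec row)
  also have "\<dots> \<le> (\<Sum>i\<in>UNIV. (norm (?A$i))^2 * (norm v)^2)"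
  proof (rule sum_mono)
    fix i
    have "\<bar>?A$i \<bullet> v\<bar> \<le> norm (?A$i) * norm v" by (rule Cauchy_Schwarz_ineq2)
    then have "\<bar>?A$i \<bullet> v\<bar>^2 \<le> (norm (?A$i) * norm v)^2"
      by (intro power_mono) auto
    then show "(?A$i \<bullet> v)^2 \<le> (norm (?A$i))^2 * (norm v)^2"
      by (simp add: power_mult_distrib)
  qed
  also have "\<dots> = (\<Sum>i\<in>UNIV. (norm (?A$i))^2) * (norm v)^2"
    by (simp add: sum_distrib_right)
  also have "(\<Sum>i\<in>UNIV. (norm (?A$i))^2) = Qf a"
    unfolding Qf_def norm_sq_vec to_matrix_def
    by (simp add: sum.cartesian_product UNIV_Times_UNIV[symmetric] del: UNIV_Times_UNIV)
  finally show ?thesis .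
qed

lemma neigh_norm:
  assumes "x1 \<in> unit_cube" "x2 \<in> unit_cube" "neighbours x1 x2"
  shows "norm (x1 - x2) \<le> 1"
proof -
  let ?S = "{j. x1 $ j \<noteq> x2 $ j}"
  have "(norm (x1 - x2))^2 = (\<Sum>j\<in>UNIV. ((x1 - x2)$j)^2)" by (rule norm_sq_vec)
  also have "\<dots> = (\<Sum>j\<in>?S. ((x1 - x2)$j)^2)"
    by (rule sum.mono_neutral_right) auto
  also have "\<dots> \<le> real (card ?S) * 1"
  proof (rule sum_bounded_above)
    fix j assume "j \<in> ?S"
    have "0 \<le> x1$j" "x1$j \<le> 1" "0 \<le> x2$j" "x2$j \<le> 1"
      using assms unfolding unit_cube_def by auto
    then have "\<bar>x1$j - x2$j\<bar> \<le> 1" by auto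
    then have "\<bar>x1$j - x2$j\<bar>^2 \<le> 1^2" by (intro power_mono) auto
    then show "((x1 - x2)$j)^2 \<le> 1" by simp
  qed
  also have "\<dots> \<le> 1" using assms(3) unfolding neighbours_def by simp
  finally have "(norm (x1 - x2))^2 \<le> 1^2" by simp
  then show ?thesis by (rule power2_le_imp_le) simp
qed

lemma pair_bound:
  assumes "x1 \<in> unit_cube" "x2 \<in> unit_cube" "neighbours x1 x2"
  shows "norm (relu_layer (to_matrix a) b x1 - relu_layer (to_matrix a) b x2) \<le> sqrt (Qf a)"
proof -
  have "norm (relu_layer (to_matrix a) b x1 - relu_layer (to_matrix a) b x2)
        \<le> norm (to_matrix a *v (x1 - x2))"
  proof -
    have "(to_matrix a *v x1 + b) - (to_matrix a *v x2 + b) = to_matrix a *v (x1 - x2)"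
      by (simp add: matrix_vector_mult_diff_distrib)
    then show ?thesis unfolding relu_layer_def using relu_lip by metis
  qed
  also have "\<dots> \<le> sqrt (Qf a) * norm (x1 - x2)"
  proof -
    have "(norm (to_matrix a *v (x1 - x2)))^2 \<le> (sqrt (Qf a) * norm (x1 - x2))^2"
      using mat_bound[of a "x1 - x2"]
      by (simp add: power_mult_distrib Qf_def sum_nonneg)
    then show ?thesis
      by (rule power2_le_imp_le) (simp add: Qf_def sum_nonneg)
  qed
  also have "\<dots> \<le> sqrt (Qf a)"
    using neigh_norm[OF assms] mult_left_le[of "norm (x1 - x2)" "sqrt (Qf a)"]
    by (simp add: Qf_def sum_nonneg)
  finally show ?thesis .
qed

lemma GS2_bound: "GS2 (relu_layer (to_matrix a) b) \<le> sqrt (Qf a)"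
  unfolding GS2_def
proof (rule cSup_least)
  have "(0::real^'d) \<in> unit_cube" by (simp add: unit_cube_def)
  moreover have "neighbours (0::real^'d) 0" by (simp add: neighbours_def)
  ultimately show "{norm (relu_layer (to_matrix a) b x1 - relu_layer (to_matrix a) b x2) |x1 x2.
       x1 \<in> unit_cube \<and> x2 \<in> unit_cube \<and> neighbours x1 x2} \<noteq> {}" by blast
qed (auto intro: pair_bound)


lemma gauss_exp:
  assumes s: "\<sigma> > 0"
  shows "(\<integral>\<^sup>+x. ennreal (exp (x^2 / (4 * \<sigma>^2))) \<partial>gaussian \<sigma>) = ennreal (sqrt 2)"
proof -
  have pt: "ennreal (normal_density 0 \<sigma> x) * ennreal (exp (x^2 / (4 * \<sigma>^2)))
      = ennreal (sqrt 2) * ennreal (normal_density 0 (sqrt 2 * \<sigma>) x)" for x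
  proof -
    have e: "exp (- ((x - 0)^2) / (2 * \<sigma>^2)) * exp (x^2 / (4 * \<sigma>^2)) = exp (- ((x - 0)^2) / (2 * (sqrt 2 * \<sigma>)^2))"
      unfolding exp_add[symmetric] using s by (simp add: power_mult_distrib field_simps)
    have c: "1 / sqrt (2 * pi * \<sigma>^2) = sqrt 2 * (1 / sqrt (2 * pi * (sqrt 2 * \<sigma>)^2))"
      using s by (simp add: power_mult_distrib real_sqrt_mult field_simps)
    have "normal_density 0 \<sigma> x * exp (x^2 / (4 * \<sigma>^2)) = sqrt 2 * normal_density 0 (sqrt 2 * \<sigma>) x"
      unfolding normal_density_def
      by (subst c) (metis (no_types, lifting) e mult.assoc)
    then show ?thesis by (simp add: ennreal_mult'[symmetric] ennreal_mult[symmetric])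
  qed
  have "(\<integral>\<^sup>+x. ennreal (exp (x^2 / (4 * \<sigma>^2))) \<partial>gaussian \<sigma>)
      = (\<integral>\<^sup>+x. ennreal (normal_density 0 \<sigma> x) * ennreal (exp (x^2 / (4 * \<sigma>^2))) \<partial>lborel)"
    unfolding gaussian_def by (rule nn_integral_density) auto
  also have "\<dots> = (\<integral>\<^sup>+x. ennreal (sqrt 2) * ennreal (normal_density 0 (sqrt 2 * \<sigma>) x) \<partial>lborel)"
    by (simp only: pt)
  also have "\<dots> = ennreal (sqrt 2) * (\<integral>\<^sup>+x. ennreal (normal_density 0 (sqrt 2 * \<sigma>) x) \<partial>lborel)"
    by (rule nn_integral_cmult) auto
  also have "(\<integral>\<^sup>+x. ennreal (normal_density 0 (sqrt 2 * \<sigma>) x) \<partial>lborel) = 1"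
    using s by (subst nn_integral_eq_integral) (auto intro!: integrable_normal_density simp: integral_normal_density)
  finally show ?thesis by simp
qed

lemma space_gml: "space (gauss_matrix_law \<sigma>) = UNIV"
  unfolding gauss_matrix_law_def gaussian_def by (simp add: space_PiM)

lemma sets_gml: "sets (gauss_matrix_law \<sigma> :: (('m::finite \<times> 'd::finite) \<Rightarrow> real) measure) = sets borel"
proof -
  have "sets (gauss_matrix_law \<sigma> :: (('m \<times> 'd) \<Rightarrow> real) measure) = sets (PiM UNIV (\<lambda>_::('m\<times>'d). borel :: real measure))"
    unfolding gauss_matrix_law_def gaussian_def by (rule sets_PiM_cong) auto
  also have "\<dots> = sets borel" by (rule sets_PiM_equal_borel)
  finally show ?thesis .
qed

lemma prob_gml: "\<sigma> > 0 \<Longrightarrow> prob_space (gauss_matrix_law \<sigma>)"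
  unfolding gauss_matrix_law_def gaussian_def
  by (intro prob_space_PiM prob_space_normal_density)

lemma Qf_cont: "continuous_on UNIV (Qf :: (('m::finite \<times> 'd::finite) \<Rightarrow> real) \<Rightarrow> real)"
  unfolding Qf_def by (intro continuous_intros continuous_on_product_coordinates)

lemma relu_layer_eq: "relu_layer (to_matrix a) b x = (\<chi> i. max ((\<Sum>j\<in>UNIV. a (i,j) * x$j) + b$i) 0)"
  by (simp add: relu_layer_def relu_vec_def to_matrix_def matrix_vector_mult_def)

lemma good_closed:
  "closed {a :: ('m::finite \<times> 'd::finite) \<Rightarrow> real. \<forall>x1 x2. x1 \<in> unit_cube \<and> x2 \<in> unit_cube \<and> neighbours x1 x2 \<longrightarrow>
     norm (relu_layer (to_matrix a) b x1 - relu_layer (to_matrix a) (b::real^'m) (x2::real^'d)) \<le> R}"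
proof -
  have "closed {a :: ('m \<times> 'd) \<Rightarrow> real. norm (relu_layer (to_matrix a) b x1 - relu_layer (to_matrix a) b x2) \<le> R}" for x1 x2 :: "real^'d"
    unfolding relu_layer_eq
    by (intro closed_Collect_le continuous_intros continuous_on_product_coordinates)
  then have "closed (\<Inter>p\<in>{(x1,x2). x1 \<in> unit_cube \<and> x2 \<in> unit_cube \<and> neighbours x1 x2}.
      {a :: ('m \<times> 'd) \<Rightarrow> real. norm (relu_layer (to_matrix a) b (fst p) - relu_layer (to_matrix a) b (snd p)) \<le> R})"
    by (intro closed_INT) auto
  also have "(\<Inter>p\<in>{(x1,x2). x1 \<in> unit_cube \<and> x2 \<in> unit_cube \<and> neighbours x1 x2}.
      {a :: ('m \<times> 'd) \<Rightarrow> real. norm (relu_layer (to_matrix a) b (fst p) - relu_layer (to_matrix a) b (snd p)) \<le> R})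
     = {a. \<forall>x1 x2. x1 \<in> unit_cube \<and> x2 \<in> unit_cube \<and> neighbours x1 x2 \<longrightarrow>
     norm (relu_layer (to_matrix a) b x1 - relu_layer (to_matrix a) b x2) \<le> R}"
    by auto
  finally show ?thesis .
qed


lemma GS2_le_iff:
  "GS2 (relu_layer (to_matrix a) b) \<le> R \<longleftrightarrow> (\<forall>x1 x2. x1 \<in> unit_cube \<and> x2 \<in> unit_cube \<and> neighbours x1 x2 \<longrightarrow>
     norm (relu_layer (to_matrix a) b x1 - relu_layer (to_matrix a) b x2) \<le> R)"
  unfolding GS2_def
proof (subst cSup_le_iff)
  have "(0::real^'d) \<in> unit_cube" by (simp add: unit_cube_def)
  moreover have "neighbours (0::real^'d) 0" by (simp add: neighbours_def)
  ultimately show "{norm (relu_layer (to_matrix a) b x1 - relu_layer (to_matrix a) b x2) |x1 x2.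
       x1 \<in> unit_cube \<and> x2 \<in> unit_cube \<and> neighbours x1 x2} \<noteq> {}" by blast
  show "bdd_above {norm (relu_layer (to_matrix a) b x1 - relu_layer (to_matrix a) b x2) |x1 x2.
       x1 \<in> unit_cube \<and> x2 \<in> unit_cube \<and> neighbours x1 x2}"
    by (rule bdd_aboveI[where M="sqrt (Qf a)"]) (auto intro: pair_bound)
qed (auto simp only: )

lemma Qf_meas: "Qf \<in> borel_measurable (gauss_matrix_law \<sigma> :: (('m::finite \<times> 'd::finite) \<Rightarrow> real) measure)"
proof -
  have "(Qf :: (('m \<times> 'd) \<Rightarrow> real) \<Rightarrow> real) \<in> borel_measurable borel"
    by (rule borel_measurable_continuous_onI[OF Qf_cont])
  then show ?thesis by (subst measurable_cong_sets[OF sets_gml refl])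
qed

lemma exp_moment:
  assumes s: "\<sigma> > 0"
  shows "(\<integral>\<^sup>+a. ennreal (exp (Qf a / (4 * \<sigma>^2))) \<partial>(gauss_matrix_law \<sigma> :: (('m::finite \<times> 'd::finite) \<Rightarrow> real) measure))
     = ennreal (sqrt 2 ^ CARD('m \<times> 'd))"
proof -
  interpret P: product_sigma_finite "\<lambda>_::('m \<times> 'd). gaussian \<sigma>"
    unfolding product_sigma_finite_def gaussian_def
    using prob_space_normal_density[OF s] prob_space_imp_sigma_finite by blast
  have eq: "ennreal (exp (Qf a / (4 * \<sigma>^2))) = (\<Prod>p\<in>UNIV. ennreal (exp ((a p)^2 / (4 * \<sigma>^2))))" for a :: "('m \<times> 'd) \<Rightarrow> real"
    unfolding Qf_def by (simp add: prod_ennreal sum_divide_distrib exp_sum)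
  have "(\<integral>\<^sup>+a. ennreal (exp (Qf a / (4 * \<sigma>^2))) \<partial>(gauss_matrix_law \<sigma> :: (('m \<times> 'd) \<Rightarrow> real) measure))
     = (\<integral>\<^sup>+a. (\<Prod>p\<in>UNIV. ennreal (exp ((a p)^2 / (4 * \<sigma>^2)))) \<partial>(PiM UNIV (\<lambda>_::('m \<times> 'd). gaussian \<sigma>)))"
    unfolding gauss_matrix_law_def eq ..
  also have "\<dots> = (\<Prod>p\<in>(UNIV::('m \<times> 'd) set). (\<integral>\<^sup>+x. ennreal (exp (x^2 / (4 * \<sigma>^2))) \<partial>gaussian \<sigma>))"
    by (rule P.product_nn_integral_prod) (auto simp: gaussian_def)
  also have "\<dots> = (\<Prod>p\<in>(UNIV::('m \<times> 'd) set). ennreal (sqrt 2))"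
    using gauss_exp[OF s] by simp
  also have "\<dots> = ennreal (sqrt 2 ^ CARD('m \<times> 'd))"
    by (simp add: ennreal_power)
  finally show ?thesis .
qed


theorem lemmaD3:
  fixes \<sigma>A :: real and b :: "real^'m::finite" and \<delta> :: real
  assumes "\<sigma>A > 0" and "0 < \<delta>" and "\<delta> < 1"
  shows "measure (gauss_matrix_law \<sigma>A :: (('m \<times> 'd::finite) \<Rightarrow> real) measure)
           {a \<in> space (gauss_matrix_law \<sigma>A).
              GS2 (relu_layer (to_matrix a) b)
                \<le> 2 * \<sigma>A * (sqrt (real (CARD('m) * CARD('d))) + sqrt (ln (1 / \<delta>)))}
         \<ge> 1 - \<delta>"
proof -
  define M where "M = (gauss_matrix_law \<sigma>A :: (('m \<times> 'd) \<Rightarrow> real) measure)"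
  define n where "n = real (CARD('m) * CARD('d))"
  define L where "L = ln (1 / \<delta>)"
  define R where "R = 2 * \<sigma>A * (sqrt n + sqrt L)"
  have s: "\<sigma>A > 0" by fact
  interpret P: prob_space M unfolding M_def by (rule prob_gml[OF s])
  have L0: "L > 0" unfolding L_def using assms by simp
  have n0: "n \<ge> 0" unfolding n_def by simp
  have cardn: "real CARD('m \<times> 'd) = n" unfolding n_def by simp
  define G where "G = {a \<in> space M. GS2 (relu_layer (to_matrix a) b) \<le> R}"
  have G_eq: "G = {a :: ('m \<times> 'd) \<Rightarrow> real. \<forall>x1 x2. x1 \<in> unit_cube \<and> x2 \<in> unit_cube \<and> neighbours x1 x2 \<longrightarrow>
     norm (relu_layer (to_matrix a) b x1 - relu_layer (to_matrix a) b (x2::real^'d)) \<le> R}"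
    unfolding G_def M_def space_gml GS2_le_iff by simp
  have Gsets: "G \<in> sets M"
    unfolding G_eq M_def sets_gml by (rule borel_closed[OF good_closed])
  define E where "E = {a \<in> space M. 1 \<le> ennreal (exp (- (n + L))) * ennreal (exp (Qf a / (4 * \<sigma>A^2)))}"
  have sub: "space M - G \<subseteq> E"
  proof
    fix a assume a: "a \<in> space M - G"
    then have "R < GS2 (relu_layer (to_matrix a) b)" unfolding G_def by auto
    also have "\<dots> \<le> sqrt (Qf a)" by (rule GS2_bound)
    finally have "R < sqrt (Qf a)" .
    moreover have "R \<ge> 0" unfolding R_def using s n0 L0 by simp
    ultimately have "R^2 < (sqrt (Qf a))^2"
      by (intro power_strict_mono) auto
    then have "R^2 < Qf a" by (simp add: Qf_def sum_nonneg)
    moreover have "4 * \<sigma>A^2 * (n + L) \<le> R^2"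
    proof -
      have "R^2 = 4 * \<sigma>A^2 * (n + L + 2 * sqrt n * sqrt L)"
      proof -
        have gen: "(2 * \<sigma>A * (u + v))^2 = 4 * \<sigma>A^2 * (u^2 + v^2 + 2 * u * v)" for u v :: real
          by (simp add: power2_eq_square algebra_simps)
        have "R^2 = 4 * \<sigma>A^2 * ((sqrt n)^2 + (sqrt L)^2 + 2 * sqrt n * sqrt L)"
          unfolding R_def by (rule gen)
        then show ?thesis using n0 L0 by simp
      qed
      moreover have "0 \<le> 2 * sqrt n * sqrt L" using n0 L0 by simp
      ultimately show ?thesis using s by (simp add: mult_left_mono)
    qed
    ultimately have le: "n + L \<le> Qf a / (4 * \<sigma>A^2)"
      using s by (simp add: field_simps)
    have "1 \<le> exp (- (n + L)) * exp (Qf a / (4 * \<sigma>A^2))"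
      unfolding exp_add[symmetric] using le by simp
    then have "ennreal 1 \<le> ennreal (exp (- (n + L)) * exp (Qf a / (4 * \<sigma>A^2)))"
      by (rule ennreal_leI)
    then have "1 \<le> ennreal (exp (- (n + L)) * exp (Qf a / (4 * \<sigma>A^2)))"
      by simp
    then show "a \<in> E" using a unfolding E_def by (simp add: ennreal_mult[symmetric])
  qed
  have um: "(\<lambda>a. ennreal (exp (Qf a / (4 * \<sigma>A^2))) * indicator (space M) a) \<in> borel_measurable M"
    using Qf_meas[of \<sigma>A] unfolding M_def by measurable
  have "emeasure M E \<le> ennreal (exp (- (n + L))) * (\<integral>\<^sup>+a. ennreal (exp (Qf a / (4 * \<sigma>A^2))) * indicator (space M) a \<partial>M)"
    unfolding E_def by (rule nn_integral_Markov_inequality[OF um]) simp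
  also have "(\<integral>\<^sup>+a. ennreal (exp (Qf a / (4 * \<sigma>A^2))) * indicator (space M) a \<partial>M)
      = (\<integral>\<^sup>+a. ennreal (exp (Qf a / (4 * \<sigma>A^2))) \<partial>M)"
    by (rule nn_integral_cong) simp
  also have "\<dots> = ennreal (sqrt 2 ^ CARD('m \<times> 'd))"
    unfolding M_def by (rule exp_moment[OF s])
  also have "ennreal (exp (- (n + L))) * ennreal (sqrt 2 ^ CARD('m \<times> 'd))
      = ennreal (exp (- (n + L)) * sqrt 2 ^ CARD('m \<times> 'd))"
    by (simp add: ennreal_mult[symmetric])
  also have "ennreal (exp (- (n + L)) * sqrt 2 ^ CARD('m \<times> 'd)) \<le> ennreal \<delta>"
  proof -
    have "sqrt 2 ^ CARD('m \<times> 'd) \<le> exp 1 ^ CARD('m \<times> 'd)"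
    proof (rule power_mono)
      have "sqrt 2 \<le> 2" by (rule real_le_lsqrt) auto
      also have "(2::real) \<le> exp 1" using exp_ge_add_one_self[of 1] by simp
      finally show "sqrt 2 \<le> exp 1" .
    qed simp
    also have "\<dots> = exp n" using cardn by (simp add: exp_of_nat_mult[symmetric])
    finally have "exp (- (n + L)) * sqrt 2 ^ CARD('m \<times> 'd) \<le> exp (- (n + L)) * exp n"
      by (simp add: mult_left_mono)
    also have "\<dots> = exp (- L)" by (simp add: exp_add[symmetric])
    also have "\<dots> = \<delta>" unfolding L_def using assms by (simp add: ln_div exp_minus)
    finally show ?thesis by (rule ennreal_leI)
  qed
  finally have "emeasure M E \<le> ennreal \<delta>" by simp
  moreover have Esets: "E \<in> sets M"
    unfolding E_def using Qf_meas[of \<sigma>A] unfolding M_def by measurable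
  ultimately have "P.prob E \<le> \<delta>"
    using assms by (simp add: P.emeasure_eq_measure)
  have "P.prob (space M - G) \<le> P.prob E"
    using sub Esets by (intro P.finite_measure_mono) auto
  moreover have "P.prob (space M - G) = 1 - P.prob G"
    using Gsets by (rule P.prob_compl)
  ultimately have "1 - \<delta> \<le> P.prob G" using \<open>P.prob E \<le> \<delta>\<close> by linarith
  then show ?thesis unfolding G_def M_def R_def n_def L_def by simp
qed

end
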